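(* Let $k\in\mathbb{N}$ and let $G=(g_1,\dots,g_k)\in\mathbb{N}_0^k$ be a telescopic sequence. Then there exists a sequence $G'$ which is both telescopic and minimal and satisfies $\langle G'\rangle=\langle G\rangle$.
   Context: $\mathbb{N}$ denotes the positive integers and $\mathbb{N}_0=\mathbb{N}\cup\{0\}$. For a finite sequence $G=(g_1,\dots,g_k)\in\mathbb{N}_0^k$ (repeats and zeros allowed), $\langle G\rangle$ denotes the set of all $\mathbb{N}_0$-linear combinations of $g_1,\dots,g_k$. $G$ is minimal if $\langle G''\rangle\ne\langle G\rangle$ for every proper subsequence $G''$ of $G$. For $1\le i\le k$ let $G_i=(g_1,\dots,g_i)$ and $d_i=\gcd(G_i)$. A sequence is called admissible if $g_1>0$ when $k=1$ and $g_1+g_2>0$ when $k\ge 2$ (so all $d_i>0$). For admissible $G$, define $c(G)=(c_2,\dots,c_k)$ with $c_j=d_{j-1}/d_j$. An admissible $G$ is telescopic if $c_jg_j\in\langle G_{j-1}\rangle$ for all $2\le j\le k$ (no requirement that $\gcd(G)=1$ or that $G$ be increasing). *)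

theory Defs
  imports Main "HOL-Library.Sublist"
begin

text \<open>Sequences G = (g_1,...,g_k) in N_0^k are lists of naturals; g_i = G ! (i-1).\<close>

definition gens :: "nat list \<Rightarrow> nat set" where
  "gens G = {x. \<exists>cs :: nat list. length cs = length G \<and>
                 x = sum_list (map2 (*) cs G)}"

definition minimal :: "nat list \<Rightarrow> bool" where
  "minimal G \<longleftrightarrow> (\<forall>H. strict_subseq H G \<longrightarrow> gens H \<noteq> gens G)"

definition dseq :: "nat list \<Rightarrow> nat \<Rightarrow> nat" where
  "dseq G i = Gcd (set (take i G))"

definition admissible :: "nat list \<Rightarrow> bool" where
  "admissible G \<longleftrightarrow> G \<noteq> [] \<and>
     (length G = 1 \<longrightarrow> G ! 0 > 0) \<and>
     (length G \<ge> 2 \<longrightarrow> G ! 0 + G ! 1 > 0)"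

definition cseq :: "nat list \<Rightarrow> nat \<Rightarrow> nat" where
  "cseq G j = dseq G (j - 1) div dseq G j"

definition telescopic :: "nat list \<Rightarrow> bool" where
  "telescopic G \<longleftrightarrow> admissible G \<and>
     (\<forall>j. 2 \<le> j \<and> j \<le> length G \<longrightarrow>
          cseq G j * G ! (j - 1) \<in> gens (take (j - 1) G))"

end

theory Submission
  imports Defs "HOL-Computational_Algebra.Euclidean_Algorithm"
begin

inductive_set mon :: "nat set \<Rightarrow> nat set" for A where
  mon0: "0 \<in> mon A"
| monS: "a \<in> mon A \<Longrightarrow> x \<in> A \<Longrightarrow> a + x \<in> mon A"

lemma mon_add: "b \<in> mon A \<Longrightarrow> a \<in> mon A \<Longrightarrow> a + b \<in> mon A"
  by (induction b rule: mon.induct) (auto simp: add.assoc[symmetric] intro: mon.intros)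

lemma mon_mult: "a \<in> mon A \<Longrightarrow> t * a \<in> mon A"
  by (induction t) (auto intro: mon.intros mon_add)

lemma mon_base: "x \<in> A \<Longrightarrow> x \<in> mon A"
  using mon.monS[OF mon.mon0] by simp

lemma mon_sub': "a \<in> mon A \<Longrightarrow> A \<subseteq> mon B \<Longrightarrow> a \<in> mon B"
  by (induction a rule: mon.induct) (auto intro: mon.intros mon_add)

lemma mon_sub: "A \<subseteq> mon B \<Longrightarrow> a \<in> mon A \<Longrightarrow> a \<in> mon B"
  using mon_sub' by blast

lemma mon_mono: "A \<subseteq> B \<Longrightarrow> mon A \<subseteq> mon B"
  using mon_sub mon_base by blast

lemma mon_dvd': "a \<in> mon A \<Longrightarrow> (\<And>x. x \<in> A \<Longrightarrow> D dvd x) \<Longrightarrow> D dvd (a::nat)"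
  by (induction a rule: mon.induct) auto

lemma mon_dvd: "(\<And>x. x \<in> A \<Longrightarrow> D dvd x) \<Longrightarrow> a \<in> mon A \<Longrightarrow> D dvd (a::nat)"
  using mon_dvd' by blast

lemma mon_empty: "mon {} = {0}"
  using mon.cases by (auto intro: mon.intros)

lemma mon_insert: "mon (insert x A) = {t * x + s | t s. s \<in> mon A}"
proof
  show "mon (insert x A) \<subseteq> {t * x + s | t s. s \<in> mon A}"
  proof
    fix a assume "a \<in> mon (insert x A)"
    then show "a \<in> {t * x + s | t s. s \<in> mon A}"
    proof (induction a rule: mon.induct)
      case mon0
      then show ?case using mon.mon0 by force
    next
      case (monS a y)
      then obtain t s where ts: "a = t*x+s" "s \<in> mon A" by auto
      show ?case
      proof (cases "y = x")
        case True
        then show ?thesis using ts by (rule_tac CollectI, rule_tac x="Suc t" in exI, auto)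
      next
        case False
        then have "s + y \<in> mon A" using monS ts by (auto intro: mon.intros)
        then show ?thesis using ts by (rule_tac CollectI, rule_tac x="t" in exI, auto)
      qed
    qed
  qed
next
  show "{t * x + s | t s. s \<in> mon A} \<subseteq> mon (insert x A)"
  proof safe
    fix t s assume "s \<in> mon A"
    then have "s \<in> mon (insert x A)" using mon_mono by blast
    moreover have "t * x \<in> mon (insert x A)" by (intro mon_mult mon_base) simp
    ultimately show "t * x + s \<in> mon (insert x A)" using mon_add by blast
  qed
qed

lemma mon_absorb: "x \<in> mon A \<Longrightarrow> mon (insert x A) = mon A"
proof
  assume x: "x \<in> mon A"
  have "insert x A \<subseteq> mon A" using x mon_base by blast
  then show "mon (insert x A) \<subseteq> mon A" using mon_sub by blast
  show "mon A \<subseteq> mon (insert x A)" by (rule mon_mono) blast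
qed

lemma gens_Nil: "gens [] = {0}"
  by (auto simp: gens_def)

lemma gens_Cons: "gens (x # xs) = {t * x + s | t s. s \<in> gens xs}"
proof
  show "gens (x # xs) \<subseteq> {t * x + s | t s. s \<in> gens xs}"
  proof
    fix a assume "a \<in> gens (x # xs)"
    then obtain cs where cs: "length cs = Suc (length xs)" "a = sum_list (map2 (*) cs (x#xs))"
      by (auto simp: gens_def)
    then obtain t cs' where "cs = t # cs'" by (cases cs) auto
    then show "a \<in> {t * x + s | t s. s \<in> gens xs}" using cs
      by (auto simp: gens_def)
  qed
next
  show "{t * x + s | t s. s \<in> gens xs} \<subseteq> gens (x # xs)"
  proof safe
    fix t s assume "s \<in> gens xs"
    then obtain cs where cs: "length cs = length xs" "s = sum_list (map2 (*) cs xs)"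
      by (auto simp: gens_def)
    then show "t * x + s \<in> gens (x # xs)"
      unfolding gens_def by (rule_tac CollectI, rule_tac x="t # cs" in exI, auto)
  qed
qed

lemma gens_mon: "gens G = mon (set G)"
  by (induction G) (auto simp: gens_Nil mon_empty gens_Cons mon_insert)

lemma Gcd_mon: "Gcd (mon A) = Gcd (A::nat set)"
proof (rule dvd_antisym)
  show "Gcd (mon A) dvd Gcd A" using mon_base by (meson Gcd_dvd Gcd_greatest)
  show "Gcd A dvd Gcd (mon A)"
    by (rule Gcd_greatest, rule mon_dvd[where A=A]) auto
qed

lemma lcm_swap_gcd:
  fixes D g k X :: nat
  assumes "D dvd k"
  shows "lcm (gcd (lcm D g) X) k = lcm (gcd g X) k"
proof -
  have "lcm (gcd (lcm D g) X) k = lcm k (gcd (lcm D g) X)" by (rule lcm.commute)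
  also have "\<dots> = gcd (lcm k (lcm D g)) (lcm k X)" by (rule lcm_gcd_distrib)
  also have "lcm k (lcm D g) = lcm k g"
    by (simp add: lcm.assoc[symmetric] lcm_proj1_if_dvd[OF assms])
  also have "gcd (lcm k g) (lcm k X) = lcm k (gcd g X)" by (rule lcm_gcd_distrib[symmetric])
  also have "\<dots> = lcm (gcd g X) k" by (rule lcm.commute)
  finally show ?thesis .
qed

lemma lcm_absorb:
  fixes D g x :: nat
  assumes "D dvd x"
  shows "lcm x (lcm D g) = lcm x g"
  by (simp add: lcm.assoc[symmetric] lcm_proj1_if_dvd[OF assms])


definition del :: "nat \<Rightarrow> 'a list \<Rightarrow> 'a list" where
  "del j xs = take j xs @ drop (Suc j) xs"

lemma set_del: "set (del j xs) = {xs!p | p. p < length xs \<and> p \<noteq> j}"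
proof safe
  fix x assume "x \<in> set (del j xs)"
  then consider "x \<in> set (take j xs)" | "x \<in> set (drop (Suc j) xs)" by (auto simp: del_def)
  then show "\<exists>p. x = xs ! p \<and> p < length xs \<and> p \<noteq> j"
  proof cases
    case 1
    then obtain p where "p < length (take j xs)" "take j xs ! p = x" by (meson in_set_conv_nth)
    then show ?thesis by (intro exI[of _ p]) auto
  next
    case 2
    then obtain p where "p < length (drop (Suc j) xs)" "drop (Suc j) xs ! p = x" by (meson in_set_conv_nth)
    then show ?thesis by (intro exI[of _ "Suc j + p"]) auto
  qed
next
  fix p assume p: "p < length xs" "p \<noteq> j"
  show "xs ! p \<in> set (del j xs)"
  proof (cases "p < j")
    case True
    then have "xs ! p = take j xs ! p" by simp
    moreover have "p < length (take j xs)" using True p by simp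
    ultimately show ?thesis unfolding del_def by (metis UnI1 nth_mem set_append)
  next
    case False
    then have "xs ! p = drop (Suc j) xs ! (p - Suc j)" using p by simp
    moreover have "p - Suc j < length (drop (Suc j) xs)" using False p by simp
    ultimately show ?thesis unfolding del_def by (metis UnI2 nth_mem set_append)
  qed
qed

lemma set_eq_nth: "set xs = {xs!p | p. p < length xs}"
  by (auto simp: in_set_conv_nth)

lemma set_ins_del: "j < length G \<Longrightarrow> set G = insert (G!j) (set (del j G))"
  unfolding set_del by (subst set_eq_nth) auto

lemma del_strict: "j < length G \<Longrightarrow> strict_subseq (del j G) G"
proof -
  assume j: "j < length G"
  have G: "G = take j G @ (G!j # drop (Suc j) G)" using j by (simp add: id_take_nth_drop)
  have "subseq (take j G @ drop (Suc j) G) (take j G @ (G!j # drop (Suc j) G))"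
    by (simp add: subseq_append') (rule list_emb_Cons, rule subseq_order.order_refl)
  moreover have "length (del j G) \<noteq> length G" using j by (simp add: del_def)
  ultimately show ?thesis using G unfolding del_def by (metis strict_subseq_def)
qed

lemma subseq_del: "subseq H G \<Longrightarrow> H \<noteq> G \<Longrightarrow> \<exists>j<length G. set H \<subseteq> set (del j G)"
proof (induction G arbitrary: H)
  case Nil
  then show ?case by simp
next
  case (Cons x G)
  show ?case
  proof (cases H)
    case Nil
    then show ?thesis by (intro exI[of _ 0]) auto
  next
    case (Cons y H')
    show ?thesis
    proof (cases "x = y")
      case True
      then have "subseq H' G" "H' \<noteq> G" using Cons Cons.prems by auto
      then obtain j where "j < length G" "set H' \<subseteq> set (del j G)" using Cons.IH by blast
      then show ?thesis using Cons True by (intro exI[of _ "Suc j"]) (auto simp: del_def)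
    next
      case False
      then have "subseq H G" using Cons Cons.prems by auto
      then have "set H \<subseteq> set G" by (metis subseq_singleton_left subsetI subseq_order.order_trans)
      then show ?thesis by (intro exI[of _ 0]) (auto simp: del_def)
    qed
  qed
qed

lemma minimal_iff: "minimal G \<longleftrightarrow> (\<forall>j<length G. G!j \<notin> mon (set (del j G)))"
proof
  assume m: "minimal G"
  show "\<forall>j<length G. G!j \<notin> mon (set (del j G))"
  proof (intro allI impI notI)
    fix j assume j: "j < length G" and x: "G!j \<in> mon (set (del j G))"
    have "gens G = gens (del j G)" unfolding gens_mon
      using set_ins_del[OF j] mon_absorb[OF x] by simp
    then show False using m del_strict[OF j] unfolding minimal_def by metis
  qed
next
  assume a: "\<forall>j<length G. G!j \<notin> mon (set (del j G))"
  show "minimal G" unfolding minimal_def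
  proof (intro allI impI notI)
    fix H assume s: "strict_subseq H G" and e: "gens H = gens G"
    then obtain j where j: "j < length G" "set H \<subseteq> set (del j G)"
      using subseq_del by (metis strict_subseq_def)
    have "G!j \<in> mon (set G)" using j by (intro mon_base) simp
    also have "\<dots> = mon (set H)" using e by (simp add: gens_mon)
    also have "\<dots> \<subseteq> mon (set (del j G))" using j mon_mono by blast
    finally show False using a j by blast
  qed
qed

lemma div_gcd_mult: "((a::nat) div gcd a b) * b = lcm a b"
  by (simp add: lcm_nat_def div_mult_swap mult.commute)

lemma tele2: "telescopic G \<longleftrightarrow> admissible G \<and>
  (\<forall>m. 1 \<le> m \<and> m < length G \<longrightarrow> lcm (Gcd (set (take m G))) (G!m) \<in> mon (set (take m G)))"
proof -
  have key: "cseq G (Suc m) * G ! m = lcm (Gcd (set (take m G))) (G!m)" if "m < length G" for m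
  proof -
    have "dseq G (Suc m) = gcd (Gcd (set (take m G))) (G!m)"
      using that by (simp add: dseq_def take_Suc_conv_app_nth gcd.commute)
    then show ?thesis unfolding cseq_def using div_gcd_mult by (simp add: dseq_def)
  qed
  have e1: "(\<forall>j. 2 \<le> j \<and> j \<le> length G \<longrightarrow> cseq G j * G ! (j - 1) \<in> mon (set (take (j - 1) G)))
    \<longleftrightarrow> (\<forall>m. 1 \<le> m \<and> m < length G \<longrightarrow> lcm (Gcd (set (take m G))) (G!m) \<in> mon (set (take m G)))"
  proof
    assume A: "\<forall>j. 2 \<le> j \<and> j \<le> length G \<longrightarrow> cseq G j * G ! (j - 1) \<in> mon (set (take (j - 1) G))"
    show "\<forall>m. 1 \<le> m \<and> m < length G \<longrightarrow> lcm (Gcd (set (take m G))) (G!m) \<in> mon (set (take m G))"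
    proof (intro allI impI)
      fix m assume m: "1 \<le> m \<and> m < length G"
      then have "cseq G (Suc m) * G ! m \<in> mon (set (take m G))" using A[rule_format, of "Suc m"] by simp
      then show "lcm (Gcd (set (take m G))) (G!m) \<in> mon (set (take m G))" using key m by simp
    qed
  next
    assume A: "\<forall>m. 1 \<le> m \<and> m < length G \<longrightarrow> lcm (Gcd (set (take m G))) (G!m) \<in> mon (set (take m G))"
    show "\<forall>j. 2 \<le> j \<and> j \<le> length G \<longrightarrow> cseq G j * G ! (j - 1) \<in> mon (set (take (j - 1) G))"
    proof (intro allI impI)
      fix j assume j: "2 \<le> j \<and> j \<le> length G"
      then obtain m where "j = Suc m" "1 \<le> m" "m < length G" by (cases j) auto
      then show "cseq G j * G ! (j - 1) \<in> mon (set (take (j - 1) G))" using A key by simp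
    qed
  qed
  show ?thesis unfolding telescopic_def gens_mon using e1 by blast
qed

lemma upd_set: "i < length xs \<Longrightarrow> set (xs[i:=x]) = insert x (set (del i xs))"
  by (auto simp: upd_conv_take_nth_drop del_def)

lemma del_upd_same: "del i (xs[i:=x]) = del i xs"
  by (simp add: del_def)

lemma set_del_upd: "j \<noteq> i \<Longrightarrow> set (del j (xs[i:=x])) \<subseteq> insert x (set (del j xs))"
proof
  fix y assume "y \<in> set (del j (xs[i:=x]))"
  then obtain p where p: "y = xs[i:=x]!p" "p < length xs" "p \<noteq> j" unfolding set_del by auto
  show "y \<in> insert x (set (del j xs))"
  proof (cases "p = i")
    case True
    then show ?thesis using p by simp
  next
    case False
    then have "y = xs!p" using p by simp
    then show ?thesis using p unfolding set_del by auto
  qed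
qed

lemma mult_in_mon: "g \<in> A \<Longrightarrow> (g::nat) dvd L \<Longrightarrow> L \<in> mon A"
  by (metis dvd_mult_div_cancel mult.commute mon_mult mon_base)

lemma mon_insert_cong: "mon A = mon B \<Longrightarrow> mon (insert x A) = mon (insert x B)"
  by (simp add: mon_insert)

lemma decomp:
  fixes D g y s t :: nat
  assumes "D dvd y" "D dvd s" "y = t * g + s"
  shows "\<exists>q. y = q * lcm D g + s"
proof -
  have "D dvd t * g" using assms by (metis dvd_add_left_iff)
  moreover have "g dvd t * g" by simp
  ultimately have "lcm D g dvd t * g" by (rule lcm_least)
  then obtain q where "t * g = lcm D g * q" unfolding dvd_def by blast
  then show ?thesis using assms(3) by (intro exI[of _ q]) (simp add: mult.commute)
qed

lemma step:
  assumes tH: "telescopic H" and mH: "minimal H" and Lm: "lcm (Gcd (set H)) g \<in> mon (set H)"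
  shows "\<exists>K. telescopic K \<and> minimal K \<and> mon (set K) = mon (insert g (set H))"
proof -
  define D where "D = Gcd (set H)"
  define L where "L = lcm D g"
  have Hne: "H \<noteq> []" using tH by (simp add: telescopic_def admissible_def)
  have nz: "x \<noteq> 0" if xin: "x \<in> set H" for x
  proof
    assume x0: "x = 0"
    obtain j where j: "j < length H" "H!j = x" using xin by (meson in_set_conv_nth)
    have "H!j \<notin> mon (set (del j H))" using minimal_iff[THEN iffD1, OF mH] j(1) by simp
    then show False using j(2) x0 mon.mon0 by simp
  qed
  have Ddvd: "D dvd x" if "x \<in> mon (set H)" for x
    using that unfolding D_def by (rule mon_dvd[rotated]) simp
  have H0in: "H!0 \<in> set H" using Hne by simp
  have H0: "H!0 > 0" using nz[OF H0in] by simp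
  have tH2: "\<And>m. 1 \<le> m \<Longrightarrow> m < length H \<Longrightarrow> lcm (Gcd (set (take m H))) (H!m) \<in> mon (set (take m H))"
    using tele2[THEN iffD1, OF tH] by simp
  have mH2: "\<And>j. j < length H \<Longrightarrow> H!j \<notin> mon (set (del j H))"
    using minimal_iff[THEN iffD1, OF mH] by simp
  have LH: "L \<in> mon (set H)" using Lm by (simp add: L_def D_def)
  show ?thesis
  proof (cases "D dvd g")
    case True
    then have "L = g" by (simp add: L_def lcm_proj2_if_dvd)
    then have "mon (insert g (set H)) = mon (set H)" using LH mon_absorb by simp
    then show ?thesis using tH mH by blast
  next
    case False
    then have gnm: "g \<notin> mon (set H)" using Ddvd by blast
    have g0: "g > 0" using False by (cases g) auto
    have delsub: "mon (set (del j H)) \<subseteq> mon (set H)" for j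
      by (rule mon_mono) (auto simp: set_del)
    show ?thesis
    proof (cases "L \<in> set H")
      case False
      define K where "K = H @ [g]"
      have "admissible K" using Hne H0 by (auto simp: K_def admissible_def nth_append)
      moreover have "lcm (Gcd (set (take m K))) (K!m) \<in> mon (set (take m K))"
        if "1 \<le> m" "m < length K" for m
      proof (cases "m < length H")
        case True
        then show ?thesis using tH2[OF that(1) True] by (simp add: K_def nth_append)
      next
        case False
        then have "m = length H" using that by (simp add: K_def)
        then show ?thesis using LH by (simp add: K_def L_def D_def)
      qed
      ultimately have tK: "telescopic K" unfolding tele2 by blast
      have mK: "minimal K" unfolding minimal_iff
      proof (intro allI impI notI)
        fix j assume j: "j < length K" and inm: "K ! j \<in> mon (set (del j K))"
        show False
        proof (cases "j = length H")
          case True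
          then show False using inm gnm by (simp add: K_def del_def)
        next
          case False
          then have jH: "j < length H" using j by (simp add: K_def)
          have "set (del j K) = insert g (set (del j H))" using jH
            by (auto simp: K_def del_def)
          then have "H!j \<in> mon (insert g (set (del j H)))" using inm jH by (simp add: K_def nth_append)
          then obtain t s where ts: "H!j = t*g + s" "s \<in> mon (set (del j H))" by (auto simp: mon_insert)
          have Dj: "D dvd H!j" using jH by (intro Ddvd mon_base) simp
          have Ds: "D dvd s" using ts delsub Ddvd by blast
          obtain q where q: "H!j = q * L + s" using decomp[OF Dj Ds ts(1)] unfolding L_def by blast
          have "L \<in> mon (insert (H!j) (set (del j H)))" using LH set_ins_del[OF jH] by simp
          then obtain b s' where bs: "L = b * H!j + s'" "s' \<in> mon (set (del j H))" by (auto simp: mon_insert)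
          show False
          proof (cases "q = 0 \<or> b = 0")
            case True
            then have "H!j \<in> mon (set (del j H))"
            proof
              assume "q = 0" then have "H!j = s" using q by simp
              then show ?thesis using ts(2) by simp
            next
              assume "b = 0"
              then have "H!j = q * s' + s" using q bs by simp
              moreover have "q * s' + s \<in> mon (set (del j H))"
                by (rule mon_add[OF ts(2) mon_mult[OF bs(2)]])
              ultimately show ?thesis by simp
            qed
            then show False using mH2 jH by blast
          next
            case False
            then have "H!j \<ge> L" using q by (cases q) auto
            moreover have "L \<ge> H!j" using bs False by (cases b) auto
            ultimately have "L = H!j" by simp
            then show False using \<open>L \<notin> set H\<close> jH by simp
          qed
        qed
      qed
      have "mon (set K) = mon (insert g (set H))" by (simp add: K_def)
      then show ?thesis using tK mK by blast
    next
      case True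
      then obtain i where i: "i < length H" "H!i = L" by (meson in_set_conv_nth)
      define K where "K = H[i := g]"
      have lK: "length K = length H" by (simp add: K_def)
      have Knth: "K!p = (if p = i then g else H!p)" if "p < length H" for p
        using that by (simp add: K_def nth_list_update)
      have setK: "set K = insert g (set (del i H))" using i by (simp add: K_def upd_set)
      have gdvdL: "g dvd L" by (simp add: L_def)
      have monK: "mon (set K) = mon (insert g (set H))"
      proof -
        have "set H = insert L (set (del i H))" using set_ins_del[OF i(1)] i by simp
        moreover have "L \<in> mon (insert g (set (del i H)))" using gdvdL by (intro mult_in_mon) auto
        ultimately have "mon (insert g (set H)) = mon (insert L (insert g (set (del i H))))"
          by (metis insert_commute)
        also have "\<dots> = mon (insert g (set (del i H)))"
          using \<open>L \<in> mon (insert g (set (del i H)))\<close> by (rule mon_absorb)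
        finally show ?thesis using setK by simp
      qed
      have mK: "minimal K" unfolding minimal_iff
      proof (intro allI impI notI)
        fix j assume j: "j < length K" and inm: "K ! j \<in> mon (set (del j K))"
        show False
        proof (cases "j = i")
          case True
          then have "g \<in> mon (set (del i H))" using inm i by (simp add: K_def del_upd_same)
          then show False using gnm delsub by blast
        next
          case False
          then have jH: "j < length H" and Kj: "K!j = H!j" using j lK Knth by auto
          have "mon (set (del j K)) \<subseteq> mon (insert g (set (del j H)))"
            using set_del_upd[OF False] unfolding K_def by (rule mon_mono)
          then have "H!j \<in> mon (insert g (set (del j H)))" using inm Kj by auto
          then obtain t s where ts: "H!j = t*g + s" "s \<in> mon (set (del j H))" by (auto simp: mon_insert)
          have Dj: "D dvd H!j" using jH by (intro Ddvd mon_base) simp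
          have Ds: "D dvd s" using ts delsub Ddvd by blast
          obtain q where q: "H!j = q * L + s" using decomp[OF Dj Ds ts(1)] unfolding L_def by blast
          have "L \<in> set (del j H)" unfolding set_del using i False by auto
          then have "q * L + s \<in> mon (set (del j H))"
            by (intro mon_add[OF ts(2)] mon_mult mon_base)
          then show False using q mH2[OF jH] by simp
        qed
      qed
      have DP: "D dvd Gcd (set (take m H))" for m
        unfolding D_def by (rule Gcd_greatest) (meson Gcd_dvd in_set_takeD)
      have "admissible K"
      proof -
        have "K!0 > 0" using H0 g0 Hne Knth[of 0] by (cases "i = 0") auto
        then show ?thesis using Hne lK by (auto simp: admissible_def K_def)
      qed
      moreover have "lcm (Gcd (set (take m K))) (K!m) \<in> mon (set (take m K))"
        if m1: "1 \<le> m" and mK: "m < length K" for m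
      proof -
        have mH: "m < length H" using mK lK by simp
        consider "m < i" | "m = i" | "i < m" by linarith
        then show ?thesis
        proof cases
          case 1
          then have "take m K = take m H" by (simp add: K_def)
          then show ?thesis using tH2[OF m1 mH] Knth[OF mH] 1 by simp
        next
          case 2
          then have tk: "take m K = take m H" by (simp add: K_def)
          have "lcm (Gcd (set (take m H))) L \<in> mon (set (take m H))" using tH2[OF m1 mH] 2 i by simp
          moreover have "lcm (Gcd (set (take m H))) L = lcm (Gcd (set (take m H))) g"
            unfolding L_def by (rule lcm_absorb[OF DP])
          ultimately show ?thesis using tk Knth[OF mH] 2 by simp
        next
          case 3
          define P where "P = take m H"
          have lP: "length P = m" using mH by (simp add: P_def)
          have iP: "i < length P" using 3 lP by simp
          have Pi: "P!i = L" using i 3 by (simp add: P_def)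
          have tk: "take m K = P[i := g]" by (simp add: K_def P_def take_update_swap)
          define R where "R = set (del i P)"
          have sP: "set P = insert L R" using set_ins_del[OF iP] Pi by (simp add: R_def)
          have sP': "set (P[i:=g]) = insert g R" using upd_set[OF iP] by (simp add: R_def)
          have Km: "K!m = H!m" using Knth[OF mH] 3 by simp
          have Dk: "D dvd H!m" using mH by (intro Ddvd mon_base) simp
          have "lcm (Gcd (set P)) (H!m) \<in> mon (set P)" using tH2[OF m1 mH] by (simp add: P_def)
          moreover have "lcm (Gcd (set P)) (H!m) = lcm (Gcd (set (P[i:=g]))) (H!m)"
            using sP sP' lcm_swap_gcd[OF Dk, of g "Gcd R"] by (simp add: L_def)
          moreover have "mon (set P) \<subseteq> mon (set (P[i:=g]))"
          proof -
            have "L \<in> mon (insert g R)" using gdvdL by (intro mult_in_mon) auto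
            then have "set P \<subseteq> mon (set (P[i:=g]))" using sP sP' mon_base by auto
            then show ?thesis using mon_sub by blast
          qed
          ultimately show ?thesis using tk Km by auto
        qed
      qed
      ultimately have tK: "telescopic K" unfolding tele2 by blast
      show ?thesis using tK mK monK by blast
    qed
  qed
qed

lemma main: "telescopic G \<Longrightarrow> \<exists>G'. telescopic G' \<and> minimal G' \<and> mon (set G') = mon (set G)"
proof (induction G rule: rev_induct)
  case Nil
  then show ?case by (simp add: telescopic_def admissible_def)
next
  case (snoc g xs)
  have tt: "admissible (xs @ [g]) \<and> (\<forall>m. 1 \<le> m \<and> m < length (xs @ [g]) \<longrightarrow>
      lcm (Gcd (set (take m (xs @ [g])))) ((xs @ [g])!m) \<in> mon (set (take m (xs @ [g]))))"
    by (rule tele2[THEN iffD1, OF snoc.prems])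
  have adm: "admissible (xs @ [g])" using tt by (rule conjunct1)
  have tG: "\<And>m. 1 \<le> m \<Longrightarrow> m < length (xs @ [g]) \<Longrightarrow>
      lcm (Gcd (set (take m (xs @ [g])))) ((xs @ [g])!m) \<in> mon (set (take m (xs @ [g])))"
    using tt by simp
  have single: "telescopic [g] \<and> minimal [g]" if g0: "g > 0"
  proof
    show "telescopic [g]" unfolding tele2 using g0 by (simp add: admissible_def)
    show "minimal [g]" unfolding minimal_iff using g0 by (simp add: del_def mon_empty)
  qed
  show ?case
  proof (cases "xs = [] \<or> xs = [0]")
    case True
    then have g0: "g > 0" using adm by (auto simp: admissible_def)
    have "mon (set [g]) = mon (set (xs @ [g]))"
    proof (cases "xs = []")
      case False
      then have "xs = [0]" using True by simp
      then have "set (xs @ [g]) = insert 0 {g}" by simp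
      then show ?thesis using mon_absorb[OF mon.mon0, of "{g}"] by simp
    qed simp
    then show ?thesis using single[OF g0] by blast
  next
    case False
    then have xne: "xs \<noteq> []" by simp
    have "admissible xs"
    proof (cases "length xs = 1")
      case True
      then obtain a where "xs = [a]" by (cases xs) auto
      then show ?thesis using False by (simp add: admissible_def)
    next
      case False
      moreover have "length xs \<noteq> 0" using xne by simp
      ultimately have "length xs \<ge> 2" by linarith
      then show ?thesis using adm xne by (auto simp: admissible_def nth_append)
    qed
    moreover have "lcm (Gcd (set (take m xs))) (xs!m) \<in> mon (set (take m xs))"
      if "1 \<le> m" "m < length xs" for m
    proof -
      have "take m (xs@[g]) = take m xs" "(xs@[g])!m = xs!m" using that by (simp_all add: nth_append)
      moreover have "m < length (xs @ [g])" using that by simp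
      ultimately show ?thesis using tG[of m] that(1) by simp
    qed
    ultimately have "telescopic xs" unfolding tele2 by blast
    then obtain H where H: "telescopic H" "minimal H" "mon (set H) = mon (set xs)"
      using snoc.IH by blast
    have "Gcd (set H) = Gcd (mon (set H))" by (simp only: Gcd_mon)
    also have "\<dots> = Gcd (set xs)" by (simp only: H(3) Gcd_mon)
    finally have "Gcd (set H) = Gcd (set xs)" .
    moreover have "lcm (Gcd (set xs)) g \<in> mon (set xs)"
    proof -
      have "1 \<le> length xs" using xne by (cases xs) auto
      then show ?thesis using tG[of "length xs"] by simp
    qed
    ultimately have "lcm (Gcd (set H)) g \<in> mon (set H)" using H(3) by simp
    then obtain K where K: "telescopic K" "minimal K" "mon (set K) = mon (insert g (set H))"
      using step[OF H(1) H(2)] by blast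
    have "mon (insert g (set H)) = mon (set (xs @ [g]))" using mon_insert_cong[OF H(3)] by simp
    then show ?thesis using K by (intro exI[of _ K]) simp
  qed
qed

theorem mainTheorem1:
  fixes G :: "nat list"
  assumes "length G \<ge> 1"
    and "telescopic G"
  shows "\<exists>G' :: nat list. telescopic G' \<and> minimal G' \<and> gens G' = gens G"
  using main[OF assms(2)] by (simp add: gens_mon)

end
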